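(* In the Node-Capacitated Clique model, there is an algorithm (the Aggregate-and-Broadcast Algorithm) that solves every Aggregate-and-Broadcast Problem in $O(\log n)$ rounds: given a distributive aggregate function $f$ and a set $A\subseteq V$ in which each member of $A$ stores exactly one input value, at the end every node of $V$ knows $f(\text{multiset of inputs of } A)$.
   Context: Node-Capacitated Clique model: a set $V$ of $n$ nodes with unique identifiers from $\{0,\dots,n-1\}$; every node knows the identifiers of all nodes. Computation proceeds in synchronous rounds; in each round every node may perform arbitrary local computation and send distinct messages of $O(\log n)$ bits each to up to $O(\log n)$ other nodes; messages are received at the beginning of the next round. A node can receive at most $O(\log n)$ messages per round; if more are sent to it, it receives an arbitrary subset of $O(\log n)$ of them and the rest are dropped. An aggregate function $f$ maps a multiset $S$ of values to a value $f(S)$; it is distributive if there is an aggregate function $g$ such that for every multiset $S$ and every partition $S_1,\dots,S_\ell$ of $S$, $f(S)=g(f(S_1),\dots,f(S_\ell))$ (e.g. MAX, MIN, SUM). *)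

theory Defs
  imports Complex_Main "HOL-Library.Multiset"
begin

type_synonym msg = "bool list"

type_synonym state = "bool list list"

definition distributive :: "('a multiset \<Rightarrow> 'a) \<Rightarrow> bool" where
  "distributive f \<longleftrightarrow>
     (\<exists>g :: 'a multiset \<Rightarrow> 'a. \<forall>S Ss.
        (sum_list Ss = S \<and> (\<forall>X\<in>set Ss. X \<noteq> {#})) \<longrightarrow> f S = g (mset (map f Ss)))"

(* A deterministic node program (all nodes run the same program, parametrised by
   their own identifier).
   ncc_init v inp   : initial state of node v with input inp (None if v has no input)
   ncc_step v s R   : local computation of node v in a round, in state s, having
                      received the set R of (sender, message) pairs; returns the new
                      state and the outgoing messages (destination \<mapsto> message)
   ncc_out s        : the value the node knows (claims as the result) in state s *)
record 's ncc_alg =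
  ncc_init :: "nat \<Rightarrow> bool list option \<Rightarrow> 's"
  ncc_step :: "nat \<Rightarrow> 's \<Rightarrow> (nat \<times> msg) set \<Rightarrow> 's \<times> (nat \<Rightarrow> msg option)"
  ncc_out  :: "'s \<Rightarrow> bool list option"

definition ncc_sent :: "nat \<Rightarrow> 's ncc_alg \<Rightarrow> (nat \<Rightarrow> 's) \<Rightarrow> (nat \<Rightarrow> (nat \<times> msg) set)
                        \<Rightarrow> nat \<Rightarrow> (nat \<times> msg) set" where
  "ncc_sent n P s r w = {(v, m). v < n \<and> snd (ncc_step P v (s v) (r v)) w = Some m}"

(* An execution in the NCC with n nodes and capacity cap (max. number of messages
   received per round); st t v = state of v after t rounds, inb t v = messages
   available to v at the beginning of round t+1.  If more than cap messages are
   sent to a node, it receives an arbitrary subset of at most cap of them. *)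
definition ncc_exec :: "nat \<Rightarrow> nat \<Rightarrow> 's ncc_alg \<Rightarrow> (nat \<Rightarrow> bool list option)
      \<Rightarrow> (nat \<Rightarrow> nat \<Rightarrow> 's) \<Rightarrow> (nat \<Rightarrow> nat \<Rightarrow> (nat \<times> msg) set) \<Rightarrow> bool" where
  "ncc_exec n cap P inp st inb \<longleftrightarrow>
     (\<forall>v<n. st 0 v = ncc_init P v (inp v) \<and> inb 0 v = {}) \<and>
     (\<forall>t. \<forall>v<n. st (Suc t) v = fst (ncc_step P v (st t v) (inb t v))) \<and>
     (\<forall>t. \<forall>w<n.
        inb (Suc t) w \<subseteq> ncc_sent n P (st t) (inb t) w \<and>
        card (inb (Suc t) w) \<le> cap \<and>
        (card (ncc_sent n P (st t) (inb t) w) \<le> cap \<longrightarrow>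
           inb (Suc t) w = ncc_sent n P (st t) (inb t) w))"

definition ncc_respects :: "nat \<Rightarrow> nat \<Rightarrow> 's ncc_alg
      \<Rightarrow> (nat \<Rightarrow> nat \<Rightarrow> 's) \<Rightarrow> (nat \<Rightarrow> nat \<Rightarrow> (nat \<times> msg) set) \<Rightarrow> nat \<Rightarrow> bool" where
  "ncc_respects n cap P st inb T \<longleftrightarrow>
     (\<forall>t<T. \<forall>v<n. let out = snd (ncc_step P v (st t v) (inb t v)) in
        finite (dom out) \<and> dom out \<subseteq> {..<n} - {v} \<and> card (dom out) \<le> cap \<and>
        (\<forall>m\<in>ran out. length m \<le> cap))"

definition ncc_solves :: "nat \<Rightarrow> nat \<Rightarrow> 's ncc_alg \<Rightarrow> (nat \<Rightarrow> bool list option)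
      \<Rightarrow> nat \<Rightarrow> bool list \<Rightarrow> bool" where
  "ncc_solves n cap P inp T res \<longleftrightarrow>
     (\<forall>st inb. ncc_exec n cap P inp st inb \<longrightarrow>
        ncc_respects n cap P st inb T \<and> (\<forall>v<n. ncc_out P (st T v) = Some res))"

definition ncc_cap :: "real \<Rightarrow> nat \<Rightarrow> nat" where
  "ncc_cap \<kappa> n = nat \<lceil>\<kappa> * log 2 (real n)\<rceil>"

end

theory Submission
  imports Defs
begin

fun encopt :: "bool list option \<Rightarrow> bool list" where
  "encopt None = []" | "encopt (Some x) = True # x"

fun decopt :: "bool list \<Rightarrow> bool list option" where
  "decopt [] = None" | "decopt (b # x) = Some x"

lemma decopt_encopt[simp]: "decopt (encopt x) = x"
  by (cases x) auto

definition encS :: "nat \<Rightarrow> bool list option \<Rightarrow> bool list list \<Rightarrow> state" where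
  "encS c v b = replicate c True # encopt v # b"

definition chunk :: "nat \<Rightarrow> nat \<Rightarrow> bool list \<Rightarrow> bool list" where
  "chunk cap k x = take cap (drop (k*cap) x)"

definition sendto :: "nat \<Rightarrow> nat \<Rightarrow> nat \<Rightarrow> nat \<Rightarrow> nat option" where
  "sendto n L i v = (if i < L then (if v mod 2^(Suc i) = 2^i then Some (v - 2^i) else None)
     else if i < 2*L then (if v < 2^(i-L) \<and> v + 2^(i-L) < n then Some (v + 2^(i-L)) else None)
     else None)"

definition rpart :: "nat \<Rightarrow> nat \<Rightarrow> nat \<Rightarrow> nat \<Rightarrow> nat option" where
  "rpart n L i w = (if i < L then (if w mod 2^(Suc i) = 0 \<and> w + 2^i < n then Some (w + 2^i) else None)
     else if i < 2*L then (if 2^(i-L) \<le> w \<and> w < 2^(Suc (i-L)) then Some (w - 2^(i-L)) else None)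
     else None)"

definition comb :: "(bool list multiset \<Rightarrow> bool list) \<Rightarrow> bool list option \<Rightarrow> bool list option \<Rightarrow> bool list option" where
  "comb g a b = (case a of None \<Rightarrow> b | Some x \<Rightarrow> (case b of None \<Rightarrow> Some x | Some y \<Rightarrow> Some (g {#x, y#})))"

definition fin :: "(bool list multiset \<Rightarrow> bool list) \<Rightarrow> nat \<Rightarrow> nat \<Rightarrow> bool list option \<Rightarrow> bool list list \<Rightarrow> bool list option" where
  "fin g L i val buf = (if buf = [] then val else if i < L then comb g val (decopt (concat buf)) else decopt (concat buf))"

definition pick :: "(nat \<times> msg) set \<Rightarrow> bool list list" where
  "pick R = (if R = {} then [] else [snd (SOME x. x \<in> R)])"

definition astep :: "nat \<Rightarrow> nat \<Rightarrow> nat \<Rightarrow> nat \<Rightarrow> (bool list multiset \<Rightarrow> bool list) \<Rightarrow> nat \<Rightarrow> state \<Rightarrow> (nat \<times> msg) set \<Rightarrow> state \<times> (nat \<Rightarrow> msg option)" where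
  "astep n cap K L g v s R = (let c = length (hd s); val = decopt (hd (tl s)); buf1 = tl (tl s) @ pick R;
     fz = (c mod K = 0 \<and> c \<noteq> 0);
     val2 = (if fz then fin g L (c div K - 1) val buf1 else val);
     buf2 = (if fz then [] else buf1)
   in (encS (Suc c) val2 buf2, \<lambda>w. if sendto n L (c div K) v = Some w then Some (chunk cap (c mod K) (encopt val2)) else None))"

definition mkalg :: "nat \<Rightarrow> nat \<Rightarrow> nat \<Rightarrow> nat \<Rightarrow> (bool list multiset \<Rightarrow> bool list) \<Rightarrow> (bool list multiset \<Rightarrow> bool list) \<Rightarrow> state ncc_alg" where
  "mkalg n cap K L f g = \<lparr>ncc_init = (\<lambda>v x. encS 0 (map_option (\<lambda>y. f {#y#}) x) []),
     ncc_step = astep n cap K L g,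
     ncc_out = (\<lambda>s. Some (case decopt (hd (tl s)) of None \<Rightarrow> f {#} | Some x \<Rightarrow> x))\<rparr>"

lemma sendto_rpart:
  assumes "v < n" "w < n"
  shows "sendto n L i v = Some w \<longleftrightarrow> rpart n L i w = Some v"
proof (cases "i < L")
  case True
  define p :: nat where "p = 2^i"
  have p2: "(2::nat)^(Suc i) = 2*p" by (simp add: p_def)
  have pp: "p > 0" by (simp add: p_def)
  have "(v mod (2*p) = p \<and> w = v - p) \<longleftrightarrow> (w mod (2*p) = 0 \<and> w + p < n \<and> v = w + p)"
  proof
    assume a: "v mod (2*p) = p \<and> w = v - p"
    have "v = 2*p*(v div (2*p)) + p" using a by (metis mult_div_mod_eq)
    then have "w = 2*p*(v div (2*p))" using a by simp
    moreover have "w + p = v" using a \<open>v = 2*p*(v div (2*p)) + p\<close> by linarith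
    ultimately show "w mod (2*p) = 0 \<and> w + p < n \<and> v = w + p" using assms by simp
  next
    assume a: "w mod (2*p) = 0 \<and> w + p < n \<and> v = w + p"
    then obtain q where "w = 2*p*q" by auto
    then show "v mod (2*p) = p \<and> w = v - p" using a pp by simp
  qed
  moreover have "sendto n L i v = (if v mod (2*p) = p then Some (v - p) else None)"
    using True by (simp add: sendto_def p_def)
  moreover have "rpart n L i w = (if w mod (2*p) = 0 \<and> w + p < n then Some (w + p) else None)"
    using True by (simp add: rpart_def p_def)
  ultimately show ?thesis by auto
next
  case False
  show ?thesis
  proof (cases "i < 2*L")
    case True
    define q :: nat where "q = 2^(i-L)"
    have "sendto n L i v = (if v < q \<and> v + q < n then Some (v + q) else None)"
      using True False by (simp add: sendto_def q_def)
    moreover have "rpart n L i w = (if q \<le> w \<and> w < 2*q then Some (w - q) else None)"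
      using True False by (simp add: rpart_def q_def)
    moreover have "(v < q \<and> v + q < n \<and> v + q = w) \<longleftrightarrow> (q \<le> w \<and> w < 2*q \<and> w - q = v)"
      using assms by linarith
    ultimately show ?thesis by auto
  next
    case F2: False
    then show ?thesis using False by (simp add: sendto_def rpart_def)
  qed
qed

lemma sendto_lt: "v < n \<Longrightarrow> sendto n L i v = Some w \<Longrightarrow> w < n \<and> w \<noteq> v"
proof (cases "i < L")
  case True
  assume v: "v < n" and s: "sendto n L i v = Some w"
  then have m: "v mod 2^(Suc i) = 2^i" and w: "w = v - 2^i" using True by (auto simp: sendto_def split: if_splits)
  have "2^i \<le> v" by (metis m mod_less_eq_dividend)
  moreover have "(0::nat) < 2^i" by simp
  ultimately show ?thesis using v w by linarith
next
  case False
  assume v: "v < n" and s: "sendto n L i v = Some w"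
  then have "w = v + 2^(i-L) \<and> v + 2^(i-L) < n" using False by (simp add: sendto_def split: if_splits)
  then show ?thesis by simp
qed

lemma rpart_lt: "w < n \<Longrightarrow> rpart n L i w = Some u \<Longrightarrow> u < n"
  by (auto simp: rpart_def split: if_splits)

lemma concat_chunks_take: "concat (map (\<lambda>k. chunk cap k x) [0..<K]) = take (K*cap) x"
proof (induction K)
  case (Suc K)
  have "take (Suc K * cap) x = take (K*cap) x @ take cap (drop (K*cap) x)"
    using take_add[of "K*cap" cap x] by (simp add: add.commute)
  then show ?case using Suc by (simp add: chunk_def)
qed simp

lemma concat_chunks: "length x \<le> K*cap \<Longrightarrow> concat (map (\<lambda>k. chunk cap k x) [0..<K]) = x"
  by (simp add: concat_chunks_take)

locale aggl =
  fixes n cap K L :: nat and f g :: "bool list multiset \<Rightarrow> bool list"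
    and A :: "nat set" and inp :: "nat \<Rightarrow> bool list"
  assumes K1: "1 \<le> K" and cap1: "1 \<le> cap" and nL: "n \<le> 2^L" and Asub: "A \<subseteq> {..<n}"
    and gprop: "\<And>S Ss. sum_list Ss = S \<Longrightarrow> \<forall>X\<in>set Ss. X \<noteq> {#} \<Longrightarrow> f S = g (mset (map f Ss))"
    and lenb: "\<And>X. X \<subseteq> A \<Longrightarrow> X \<noteq> {} \<Longrightarrow> length (f (image_mset inp (mset_set X))) < K*cap"
begin

definition F :: "nat set \<Rightarrow> bool list option" where
  "F X = (if X = {} then None else Some (f (image_mset inp (mset_set X))))"

lemma F_union:
  assumes "finite X" "finite Y" "X \<inter> Y = {}"
  shows "F (X \<union> Y) = comb g (F X) (F Y)"
proof (cases "X = {} \<or> Y = {}")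
  case True
  then show ?thesis by (auto simp: F_def comb_def)
next
  case False
  let ?SX = "image_mset inp (mset_set X)" and ?SY = "image_mset inp (mset_set Y)"
  have ne: "?SX \<noteq> {#}" "?SY \<noteq> {#}" using False assms by (auto simp: mset_set_empty_iff)
  have "image_mset inp (mset_set (X \<union> Y)) = ?SX + ?SY"
    using assms by (simp add: mset_set_Union)
  moreover have "f (?SX + ?SY) = g (mset (map f [?SX, ?SY]))"
    using gprop[of "[?SX, ?SY]" "?SX + ?SY"] ne by simp
  ultimately show ?thesis using False by (simp add: F_def comb_def)
qed

primrec W :: "nat \<Rightarrow> nat \<Rightarrow> bool list option" where
  "W 0 v = (if v \<in> A then Some (f {#inp v#}) else None)"
| "W (Suc i) v = (case rpart n L i v of None \<Rightarrow> W i v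
     | Some u \<Rightarrow> if i < L then comb g (W i v) (W i u) else W i u)"

lemma Wred: "i \<le> L \<Longrightarrow> 2^i dvd v \<Longrightarrow> W i v = F (A \<inter> {v..<v+2^i})"
proof (induction i arbitrary: v)
  case 0
  have "A \<inter> {v..<v+1} = (if v \<in> A then {v} else {})" by auto
  then show ?case by (simp add: F_def)
next
  case (Suc i)
  have iL: "i < L" using Suc.prems by simp
  have pp: "(2::nat)^i dvd 2^(Suc i)" by simp
  have d1: "2^i dvd v" using Suc.prems(2) pp dvd_trans by blast
  have d2: "2^i dvd v + 2^i" using d1 by simp
  have md: "v mod 2^(Suc i) = 0" using Suc.prems(2) by simp
  have split: "A \<inter> {v..<v+2^(Suc i)} = (A \<inter> {v..<v+2^i}) \<union> (A \<inter> {v+2^i..<v+2^i+2^i})"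
    by auto
  show ?case
  proof (cases "v + 2^i < n")
    case True
    then have "rpart n L i v = Some (v + 2^i)" using iL md by (simp add: rpart_def)
    then have "W (Suc i) v = comb g (W i v) (W i (v+2^i))" using iL by simp
    also have "\<dots> = comb g (F (A \<inter> {v..<v+2^i})) (F (A \<inter> {v+2^i..<v+2^i+2^i}))"
      using Suc.IH[of v] Suc.IH[of "v+2^i"] d1 d2 iL by simp
    also have "\<dots> = F (A \<inter> {v..<v+2^(Suc i)})"
      unfolding split by (rule F_union[symmetric]) auto
    finally show ?thesis .
  next
    case False
    then have "rpart n L i v = None" using iL by (simp add: rpart_def)
    then have "W (Suc i) v = W i v" by simp
    moreover have "A \<inter> {v+2^i..<v+2^i+2^i} = {}" using Asub False by auto
    ultimately show ?thesis using split Suc.IH[of v] d1 iL by simp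
  qed
qed

lemma WL: "W L 0 = F A"
proof -
  have "W L 0 = F (A \<inter> {0..<0+2^L})" by (rule Wred) auto
  moreover have "A \<inter> {0..<0+2^L} = A" using Asub nL by auto
  ultimately show ?thesis by simp
qed

lemma Wbc: "b \<le> L \<Longrightarrow> v < 2^b \<Longrightarrow> W (L+b) v = F A"
proof (induction b arbitrary: v)
  case 0
  then show ?case using WL by simp
next
  case (Suc b)
  have r: "rpart n L (L+b) v = (if 2^b \<le> v \<and> v < 2^(Suc b) then Some (v - 2^b) else None)"
    using Suc.prems by (simp add: rpart_def)
  show ?case
  proof (cases "2^b \<le> v")
    case True
    then have "W (L + Suc b) v = W (L+b) (v - 2^b)" using r Suc.prems by simp
    also have "\<dots> = F A" using Suc.IH[of "v - 2^b"] Suc.prems True by simp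
    finally show ?thesis .
  next
    case False
    then have "W (L + Suc b) v = W (L+b) v" using r by simp
    then show ?thesis using Suc.IH[of v] Suc.prems False by simp
  qed
qed

lemma lenF: "X \<subseteq> A \<Longrightarrow> length (encopt (F X)) \<le> K*cap"
proof (cases "X = {}")
  case False
  assume "X \<subseteq> A"
  then have "length (f (image_mset inp (mset_set X))) < K*cap" using lenb False by blast
  then show ?thesis using False by (simp add: F_def)
qed (simp add: F_def)

lemma lenW: "w < n \<Longrightarrow> rpart n L i w = Some u \<Longrightarrow> length (encopt (W i u)) \<le> K*cap"
proof (cases "i < L")
  case True
  assume w: "w < n" and r: "rpart n L i w = Some u"
  then have u: "u = w + 2^i" and md: "w mod 2^(Suc i) = 0" using True by (auto simp: rpart_def split: if_splits)
  have pp: "(2::nat)^i dvd 2^(Suc i)" by simp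
  have "2^(Suc i) dvd w" using md by (simp add: mod_eq_0_iff_dvd)
  then have "2^i dvd w" using pp dvd_trans by blast
  then have "2^i dvd u" using u by simp
  then have "W i u = F (A \<inter> {u..<u+2^i})" using True by (intro Wred) auto
  then show ?thesis using lenF[of "A \<inter> {u..<u+2^i}"] by simp
next
  case False
  assume w: "w < n" and r: "rpart n L i w = Some u"
  then have i2: "i < 2*L" and u: "u = w - 2^(i-L)" and b: "w < 2^(Suc (i-L))" "2^(i-L) \<le> w"
    using False by (auto simp: rpart_def split: if_splits)
  have "u < 2^(i-L)" using u b by simp
  moreover have "i = L + (i - L)" using False by simp
  ultimately have "W i u = F A" using Wbc[of "i-L" u] i2 by simp
  then show ?thesis using lenF[of A] by simp
qed

end

context aggl
begin

definition bufspec :: "nat \<Rightarrow> nat \<Rightarrow> nat \<Rightarrow> bool list list" where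
  "bufspec i j v = (case rpart n L i v of None \<Rightarrow> []
     | Some u \<Rightarrow> map (\<lambda>k. chunk cap k (encopt (W i u))) [0..<j])"

definition spec :: "nat \<Rightarrow> nat \<Rightarrow> state" where
  "spec t v = encS t (W ((t-1) div K) v) (bufspec ((t-1) div K) ((t-1) mod K) v)"

definition Rspec :: "nat \<Rightarrow> nat \<Rightarrow> (nat \<times> msg) set" where
  "Rspec t w = (if t = 0 then {} else case rpart n L ((t-1) div K) w of None \<Rightarrow> {}
     | Some u \<Rightarrow> {(u, chunk cap ((t-1) mod K) (encopt (W ((t-1) div K) u)))})"

definition outspec :: "nat \<Rightarrow> nat \<Rightarrow> nat \<Rightarrow> msg option" where
  "outspec t v = (\<lambda>w. if sendto n L (t div K) v = Some w
      then Some (chunk cap (t mod K) (encopt (W (t div K) v))) else None)"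

lemma pick_single[simp]: "pick {x} = [snd x]"
  by (simp add: pick_def)

lemma pick_empty[simp]: "pick {} = []"
  by (simp add: pick_def)

lemma step_spec:
  assumes v: "v < n"
  shows "astep n cap K L g v (spec t v) (Rspec t v) = (spec (Suc t) v, outspec t v)"
proof (cases t)
  case 0
  have "bufspec 0 0 v = []" by (simp add: bufspec_def split: option.splits)
  have z: "(0::nat) div K = 0" "(0::nat) mod K = 0" by simp_all
  show ?thesis unfolding 0 using K1 \<open>bufspec 0 0 v = []\<close> by (simp add: astep_def Let_def spec_def Rspec_def encS_def outspec_def z cong: if_cong)
next
  case (Suc t')
  define i where "i = t' div K"
  define j where "j = t' mod K"
  have jK: "j < K" using K1 by (simp add: j_def)
  have buf1: "bufspec i j v @ pick (Rspec t v) = (case rpart n L i v of None \<Rightarrow> []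
     | Some u \<Rightarrow> map (\<lambda>k. chunk cap k (encopt (W i u))) [0..<Suc j])"
    using Suc by (simp add: bufspec_def Rspec_def i_def j_def split: option.splits)
  have hd1: "length (hd (spec t v)) = t" "decopt (hd (tl (spec t v))) = W i v"
    "tl (tl (spec t v)) = bufspec i j v"
    using Suc by (simp_all add: spec_def encS_def i_def j_def)
  show ?thesis
  proof (cases "Suc j = K")
    case True
    have tm: "t mod K = 0" "t div K = Suc i" using True Suc
      by (simp_all add: mod_Suc div_Suc i_def j_def)
    have fin: "fin g L i (W i v) (bufspec i j v @ pick (Rspec t v)) = W (Suc i) v"
    proof (cases "rpart n L i v")
      case None
      then show ?thesis using buf1 by (simp add: fin_def)
    next
      case (Some u)
      have len: "length (encopt (W i u)) \<le> K*cap" using lenW[OF v Some] .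
      have "concat (map (\<lambda>k. chunk cap k (encopt (W i u))) [0..<Suc j]) = encopt (W i u)"
        using True concat_chunks[OF len] by simp
      then show ?thesis using buf1 Some by (simp add: fin_def)
    qed
    have "bufspec (Suc i) 0 v = []" by (simp add: bufspec_def split: option.splits)
    then show ?thesis using Suc tm fin hd1
      by (simp add: astep_def Let_def spec_def outspec_def cong: if_cong)
  next
    case False
    have tm: "t mod K = Suc j" "t div K = i" using False Suc
      by (simp_all add: mod_Suc div_Suc i_def j_def)
    have "bufspec i j v @ pick (Rspec t v) = bufspec i (Suc j) v"
      using buf1 by (simp add: bufspec_def split: option.splits)
    then show ?thesis using Suc tm hd1
      by (simp add: astep_def Let_def spec_def outspec_def cong: if_cong)
  qed
qed

lemma sent_spec:
  assumes w: "w < n"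
  shows "{(v, m). v < n \<and> outspec t v w = Some m} = Rspec (Suc t) w"
proof (cases "rpart n L (t div K) w")
  case None
  then have "\<forall>v<n. sendto n L (t div K) v \<noteq> Some w" using sendto_rpart w by auto
  then show ?thesis using None by (auto simp: outspec_def Rspec_def)
next
  case (Some u)
  have u: "u < n" using rpart_lt[OF w Some] .
  have "\<forall>v<n. sendto n L (t div K) v = Some w \<longleftrightarrow> v = u" using sendto_rpart w Some by auto
  then show ?thesis using Some u by (auto simp: outspec_def Rspec_def)
qed

lemma card_Rspec: "card (Rspec t w) \<le> 1"
  by (simp add: Rspec_def split: option.splits)

lemma exec_parts:
  assumes "ncc_exec n cap P inpo st inb"
  shows "\<forall>v<n. st 0 v = ncc_init P v (inpo v) \<and> inb 0 v = {}"
    "\<forall>t. \<forall>v<n. st (Suc t) v = fst (ncc_step P v (st t v) (inb t v))"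
    "\<forall>t. \<forall>w<n.
        inb (Suc t) w \<subseteq> ncc_sent n P (st t) (inb t) w \<and>
        card (inb (Suc t) w) \<le> cap \<and>
        (card (ncc_sent n P (st t) (inb t) w) \<le> cap \<longrightarrow>
           inb (Suc t) w = ncc_sent n P (st t) (inb t) w)"
  using assms unfolding ncc_exec_def by (rule conjunct1, rule conjunct1[OF conjunct2], rule conjunct2[OF conjunct2])

lemma exec_spec:
  assumes ex: "ncc_exec n cap (mkalg n cap K L f g) (\<lambda>v. if v \<in> A then Some (inp v) else None) st inb"
  shows "\<forall>v<n. st t v = spec t v \<and> inb t v = Rspec t v"
proof (induction t)
  case 0
  have ex0: "\<forall>v<n. st 0 v = ncc_init (mkalg n cap K L f g) v (if v \<in> A then Some (inp v) else None) \<and> inb 0 v = {}"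
    using exec_parts(1)[OF ex] by simp
  have "bufspec 0 0 v = []" for v by (simp add: bufspec_def split: option.splits)
  then show ?case using ex0 by (simp add: mkalg_def spec_def Rspec_def)
next
  case (Suc t)
  have ex1: "\<forall>v<n. st (Suc t) v = fst (ncc_step (mkalg n cap K L f g) v (st t v) (inb t v))"
    using exec_parts(2)[OF ex] by (rule spec)
  have ex2: "\<forall>w<n. inb (Suc t) w \<subseteq> ncc_sent n (mkalg n cap K L f g) (st t) (inb t) w \<and>
        card (inb (Suc t) w) \<le> cap \<and>
        (card (ncc_sent n (mkalg n cap K L f g) (st t) (inb t) w) \<le> cap \<longrightarrow>
           inb (Suc t) w = ncc_sent n (mkalg n cap K L f g) (st t) (inb t) w)"
    using exec_parts(3)[OF ex] by (rule spec)
  have stp: "ncc_step (mkalg n cap K L f g) v (st t v) (inb t v) = (spec (Suc t) v, outspec t v)" if "v < n" for v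
  proof -
    have "st t v = spec t v" "inb t v = Rspec t v" using Suc that by blast+
    then show ?thesis using step_spec[OF that, of t] by (simp add: mkalg_def)
  qed
  have st: "st (Suc t) v = spec (Suc t) v" if "v < n" for v
  proof -
    have "st (Suc t) v = fst (ncc_step (mkalg n cap K L f g) v (st t v) (inb t v))" using ex1 that by blast
    also have "\<dots> = spec (Suc t) v" unfolding stp[OF that] by (rule fst_conv)
    finally show ?thesis .
  qed
  have sent: "ncc_sent n (mkalg n cap K L f g) (st t) (inb t) w = Rspec (Suc t) w" if "w < n" for w
  proof -
    have "ncc_sent n (mkalg n cap K L f g) (st t) (inb t) w = {(v, m). v < n \<and> outspec t v w = Some m}"
      unfolding ncc_sent_def using stp by auto
    then show ?thesis using sent_spec[OF that] by simp
  qed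
  have "inb (Suc t) w = Rspec (Suc t) w" if "w < n" for w
  proof -
    have "card (Rspec (Suc t) w) \<le> cap" using card_Rspec[of "Suc t" w] cap1 by linarith
    then show ?thesis using ex2 that sent[OF that] by auto
  qed
  then show ?case using st by simp
qed

lemma out_ok:
  assumes v: "v < n"
  shows "let out = snd (ncc_step (mkalg n cap K L f g) v (st t v) (inb t v))
        in finite (dom out) \<and> dom out \<subseteq> {..<n} - {v} \<and> card (dom out) \<le> cap \<and> (\<forall>m\<in>ran out. length m \<le> cap)"
proof -
  let ?c = "length (hd (st t v))"
  obtain X where out: "snd (ncc_step (mkalg n cap K L f g) v (st t v) (inb t v))
     = (\<lambda>w. if sendto n L (?c div K) v = Some w then Some (chunk cap (?c mod K) X) else None)"
    by (simp add: mkalg_def astep_def Let_def)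
  let ?out = "(\<lambda>w. if sendto n L (?c div K) v = Some w then Some (chunk cap (?c mod K) X) else None)"
  have dom: "dom ?out \<subseteq> set_option (sendto n L (?c div K) v)"
    by (auto simp: dom_def split: if_splits)
  have fin: "finite (dom ?out)" using finite_subset[OF dom] by simp
  have "card (dom ?out) \<le> card (set_option (sendto n L (?c div K) v))"
    using dom by (intro card_mono) auto
  also have "\<dots> \<le> 1" by (cases "sendto n L (?c div K) v") auto
  finally have cd: "card (dom ?out) \<le> cap" using cap1 by linarith
  have sub: "dom ?out \<subseteq> {..<n} - {v}" using sendto_lt[OF v] by (auto simp: dom_def split: if_splits)
  have rn: "\<forall>m\<in>ran ?out. length m \<le> cap" by (auto simp: ran_def chunk_def split: if_splits)
  show "let out = snd (ncc_step (mkalg n cap K L f g) v (st t v) (inb t v))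
        in finite (dom out) \<and> dom out \<subseteq> {..<n} - {v} \<and> card (dom out) \<le> cap \<and> (\<forall>m\<in>ran out. length m \<le> cap)"
    unfolding Let_def out by (intro conjI fin sub cd rn)
qed

lemma respects_any: "ncc_respects n cap (mkalg n cap K L f g) st inb T"
  unfolding ncc_respects_def
  apply (intro allI impI)
  apply (rule out_ok)
  apply assumption
  done

lemma solves:
  "ncc_solves n cap (mkalg n cap K L f g) (\<lambda>v. if v \<in> A then Some (inp v) else None) (2*L*K+1)
     (f (image_mset inp (mset_set A)))"
  unfolding ncc_solves_def
proof (intro allI impI)
  fix st inb
  assume ex: "ncc_exec n cap (mkalg n cap K L f g) (\<lambda>v. if v \<in> A then Some (inp v) else None) st inb"
  have r: "ncc_respects n cap (mkalg n cap K L f g) st inb (2*L*K+1)" by (rule respects_any)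
  have o: "\<forall>v<n. ncc_out (mkalg n cap K L f g) (st (2*L*K+1) v) = Some (f (image_mset inp (mset_set A)))"
  proof (intro allI impI)
    fix v assume v: "v < n"
    have e: "st (2*L*K+1) v = spec (2*L*K+1) v" using exec_spec[OF ex] v by blast
    have d: "(2*L*K+1-1) div K = L + L" using K1 by simp
    have "v < 2^L" using v nL by linarith
    then have w: "W (L+L) v = F A" using Wbc[of L v] by simp
    have fA: "finite A" using Asub finite_subset by blast
    show "ncc_out (mkalg n cap K L f g) (st (2*L*K+1) v) = Some (f (image_mset inp (mset_set A)))"
      unfolding e spec_def d w using fA by (auto simp: mkalg_def encS_def F_def)
  qed
  show "ncc_respects n cap (mkalg n cap K L f g) st inb (2*L*K+1) \<and>
    (\<forall>v<n. ncc_out (mkalg n cap K L f g) (st (2*L*K+1) v) = Some (f (image_mset inp (mset_set A))))"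
    using r o by blast
qed

end

definition Lg :: "nat \<Rightarrow> nat" where "Lg n = (LEAST l. n \<le> 2^l)"
definition Bd :: "real \<Rightarrow> nat \<Rightarrow> nat" where "Bd d n = nat \<lceil>d * log 2 (real n)\<rceil>"
definition Kc :: "real \<Rightarrow> real \<Rightarrow> nat \<Rightarrow> nat" where
  "Kc \<kappa> d n = (Bd d n + 1) div ncc_cap \<kappa> n + 1"
definition gsel :: "(bool list multiset \<Rightarrow> bool list) \<Rightarrow> (bool list multiset \<Rightarrow> bool list)" where
  "gsel f = (SOME g. \<forall>S Ss. (sum_list Ss = S \<and> (\<forall>X\<in>set Ss. X \<noteq> {#})) \<longrightarrow> f S = g (mset (map f Ss)))"

lemma Lg_le: "n \<le> 2^(Lg n)"
  unfolding Lg_def by (rule LeastI[of _ n]) (simp add: less_imp_le)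

lemma Lg_bound:
  assumes "n \<ge> 2"
  shows "real (Lg n) \<le> 2 * log 2 (real n)"
proof -
  have l1: "log 2 (real n) \<ge> 1" using assms by simp
  have "Lg n \<noteq> 0"
  proof
    assume "Lg n = 0"
    then show False using Lg_le[of n] assms by simp
  qed
  then obtain m where m: "Lg n = Suc m" by (cases "Lg n") auto
  have "m < Lg n" using m by simp
  then have "\<not> n \<le> 2^m" unfolding Lg_def by (rule not_less_Least)
  then have "2^m < n" by simp
  then have "real (2^m) < real n" by (simp only: of_nat_less_iff)
  then have "(2::real)^m < real n" by simp
  then have "real m < log 2 (real n)" by (rule less_log_of_power) simp
  moreover have "real (Lg n) = real m + 1" using m by simp
  ultimately show ?thesis using l1 by linarith
qed

lemma cap_ge:
  assumes "\<kappa> > 0" "n \<ge> 2"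
  shows "real (ncc_cap \<kappa> n) \<ge> \<kappa> * log 2 (real n)" "ncc_cap \<kappa> n \<ge> 1"
proof -
  have l1: "log 2 (real n) \<ge> 1" using assms by simp
  have p: "\<kappa> * log 2 (real n) > 0" using assms l1 by simp
  have c0: "0 < \<lceil>\<kappa> * log 2 (real n)\<rceil>" using p by simp
  have r: "real (ncc_cap \<kappa> n) = real_of_int \<lceil>\<kappa> * log 2 (real n)\<rceil>"
    unfolding ncc_cap_def using c0 by simp
  show "real (ncc_cap \<kappa> n) \<ge> \<kappa> * log 2 (real n)"
    unfolding r by (rule le_of_int_ceiling)
  have "real (ncc_cap \<kappa> n) > 0" unfolding r using c0 by simp
  then show "ncc_cap \<kappa> n \<ge> 1" by simp
qed

lemma K_bound:
  assumes k: "\<kappa> > 0" and n: "n \<ge> 2"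
  shows "real (Kc \<kappa> d n) \<le> \<bar>d\<bar>/\<kappa> + 2/\<kappa> + 1"
proof -
  define l where "l = log 2 (real n)"
  define c where "c = ncc_cap \<kappa> n"
  have l1: "l \<ge> 1" using n by (simp add: l_def)
  have c1: "real c \<ge> \<kappa> * l" "c \<ge> 1" using cap_ge[OF k n] by (simp_all add: c_def l_def)
  have dl: "d * l \<le> \<bar>d\<bar> * l" using l1 by (intro mult_right_mono) auto
  have B: "real (Bd d n) \<le> \<bar>d\<bar> * l + 1"
  proof (cases "0 \<le> \<lceil>d * l\<rceil>")
    case True
    then have "real (Bd d n) = real_of_int \<lceil>d * l\<rceil>" by (simp add: Bd_def l_def)
    also have "\<dots> \<le> d * l + 1" by (rule of_int_ceiling_le_add_one)
    finally show ?thesis using dl by linarith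
  next
    case False
    then have "Bd d n = 0" by (simp add: Bd_def l_def)
    moreover have "0 \<le> \<bar>d\<bar> * l" using l1 by simp
    ultimately show ?thesis by simp
  qed
  have "real ((Bd d n + 1) div c) \<le> real (Bd d n + 1) / real c" by (rule of_nat_div_le_of_nat)
  also have "\<dots> \<le> (\<bar>d\<bar> * l + 2) / (\<kappa> * l)"
  proof (rule frac_le)
    show "0 \<le> \<bar>d\<bar> * l + 2" using l1 by simp
    show "real (Bd d n + 1) \<le> \<bar>d\<bar> * l + 2" using B by simp
    show "0 < \<kappa> * l" using k l1 by simp
    show "\<kappa> * l \<le> real c" using c1 by simp
  qed
  also have "\<dots> = \<bar>d\<bar>/\<kappa> + 2/(\<kappa>*l)" using k l1 by (simp add: field_simps)
  also have "\<dots> \<le> \<bar>d\<bar>/\<kappa> + 2/\<kappa>"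
  proof -
    have "\<kappa> \<le> \<kappa> * l" using k l1 by simp
    then have "2/(\<kappa>*l) \<le> 2/\<kappa>" using k by (intro divide_left_mono) auto
    then show ?thesis by simp
  qed
  finally show ?thesis by (simp add: Kc_def c_def)
qed

lemma T_bound:
  assumes k: "\<kappa> > 0" and n: "n \<ge> 2"
  shows "real (2 * Lg n * Kc \<kappa> d n + 1) \<le> (4 * (\<bar>d\<bar>/\<kappa> + 2/\<kappa> + 1) + 1) * log 2 (real n)"
proof -
  define l where "l = log 2 (real n)"
  define D where "D = \<bar>d\<bar>/\<kappa> + 2/\<kappa> + 1"
  have l1: "l \<ge> 1" using n by (simp add: l_def)
  have L: "real (Lg n) \<le> 2 * l" using Lg_bound[OF n] by (simp add: l_def)
  have K: "real (Kc \<kappa> d n) \<le> D" using K_bound[OF k n] by (simp add: D_def)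
  have "real (Lg n) * real (Kc \<kappa> d n) \<le> (2*l) * D"
    by (rule mult_mono[OF L K]) (use l1 in auto)
  then have "real (2 * Lg n * Kc \<kappa> d n + 1) \<le> 4 * D * l + 1" by (simp add: ac_simps)
  also have "\<dots> \<le> 4 * D * l + l" using l1 by simp
  finally show ?thesis by (simp add: D_def l_def algebra_simps)
qed

theorem theorem2p2:
  fixes \<kappa> d :: real
  assumes "\<kappa> > 0"
  shows "\<exists>(C::real) (alg :: nat \<Rightarrow> (bool list multiset \<Rightarrow> bool list) \<Rightarrow> state ncc_alg).
    \<forall>n \<ge> 2. \<forall>(f :: bool list multiset \<Rightarrow> bool list) (A :: nat set) (inp :: nat \<Rightarrow> bool list).
      distributive f \<and> A \<subseteq> {..<n} \<and>
      (\<forall>v\<in>A. real (length (inp v)) \<le> d * log 2 (real n)) \<and>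
      (\<forall>S. S \<noteq> {#} \<and> S \<subseteq># image_mset inp (mset_set A) \<longrightarrow>
           real (length (f S)) \<le> d * log 2 (real n))
      \<longrightarrow> (\<exists>T::nat. real T \<le> C * log 2 (real n) \<and>
             ncc_solves n (ncc_cap \<kappa> n) (alg n f)
               (\<lambda>v. if v \<in> A then Some (inp v) else None) T
               (f (image_mset inp (mset_set A))))"
proof (rule exI[where x = "4 * (\<bar>d\<bar>/\<kappa> + 2/\<kappa> + 1) + 1"],
       rule exI[where x = "\<lambda>n f. mkalg n (ncc_cap \<kappa> n) (Kc \<kappa> d n) (Lg n) f (gsel f)"], intro allI impI)
  fix n :: nat and f :: "bool list multiset \<Rightarrow> bool list" and A :: "nat set" and inp :: "nat \<Rightarrow> bool list"
  assume n: "n \<ge> 2"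
  assume H: "distributive f \<and> A \<subseteq> {..<n} \<and>
      (\<forall>v\<in>A. real (length (inp v)) \<le> d * log 2 (real n)) \<and>
      (\<forall>S. S \<noteq> {#} \<and> S \<subseteq># image_mset inp (mset_set A) \<longrightarrow>
           real (length (f S)) \<le> d * log 2 (real n))"
  define cap where "cap = ncc_cap \<kappa> n"
  define K where "K = Kc \<kappa> d n"
  define L where "L = Lg n"
  have cap1: "1 \<le> cap" using cap_ge[OF assms n] by (simp add: cap_def)
  have Asub: "A \<subseteq> {..<n}" using H by (elim conjE)
  have HS: "\<forall>S. S \<noteq> {#} \<and> S \<subseteq># image_mset inp (mset_set A) \<longrightarrow>
           real (length (f S)) \<le> d * log 2 (real n)" using H by (elim conjE)
  have gp: "\<forall>S Ss. (sum_list Ss = S \<and> (\<forall>X\<in>set Ss. X \<noteq> {#})) \<longrightarrow> f S = gsel f (mset (map f Ss))"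
  proof -
    have "distributive f" using H by blast
    then have ex: "\<exists>g. \<forall>S Ss. (sum_list Ss = S \<and> (\<forall>X\<in>set Ss. X \<noteq> {#})) \<longrightarrow> f S = g (mset (map f Ss))"
      unfolding distributive_def .
    show ?thesis unfolding gsel_def by (rule someI_ex[OF ex])
  qed
  have lenb: "length (f (image_mset inp (mset_set X))) < K*cap" if X: "X \<subseteq> A" "X \<noteq> {}" for X
  proof -
    have fA: "finite A" using Asub by (rule finite_subset) simp
    have fX1: "finite X" using X(1) fA by (rule finite_subset)
    note fX = fX1 fA
    let ?S = "image_mset inp (mset_set X)"
    have "mset_set X \<noteq> {#}" using X(2) fX(1) by (simp add: mset_set_empty_iff)
    then have "?S \<noteq> {#}" by simp
    moreover have "mset_set X \<subseteq># mset_set A" using X(1) fX by (simp only: msubset_mset_set_iff)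
    then have "?S \<subseteq># image_mset inp (mset_set A)" by (rule image_mset_subseteq_mono)
    ultimately have "real (length (f ?S)) \<le> d * log 2 (real n)" using HS[rule_format, of ?S] by blast
    then have "int (length (f ?S)) \<le> \<lceil>d * log 2 (real n)\<rceil>"
      by (simp add: le_ceiling_iff)
    then have "length (f ?S) \<le> Bd d n" unfolding Bd_def by linarith
    moreover have "Bd d n + 1 < K * cap"
    proof -
      define B where "B = Bd d n + 1"
      have e: "B = (B div cap) * cap + B mod cap" by simp
      have r: "B mod cap < cap" using cap1 by simp
      have "(B div cap + 1) * cap = (B div cap) * cap + cap" by (simp add: distrib_right)
      then have "Bd d n + 1 < ((Bd d n + 1) div cap + 1) * cap" using e r unfolding B_def[symmetric] by linarith
      then show ?thesis by (simp add: K_def Kc_def cap_def)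
    qed
    ultimately show ?thesis by linarith
  qed
  interpret aggl n cap K L f "gsel f" A inp
  proof
    show "1 \<le> K" by (simp add: K_def Kc_def)
    show "1 \<le> cap" by (rule cap1)
    show "n \<le> 2^L" unfolding L_def by (rule Lg_le)
    show "A \<subseteq> {..<n}" by (rule Asub)
    show "\<And>S Ss. sum_list Ss = S \<Longrightarrow> \<forall>X\<in>set Ss. X \<noteq> {#} \<Longrightarrow> f S = gsel f (mset (map f Ss))"
      using gp by blast
    show "\<And>X. X \<subseteq> A \<Longrightarrow> X \<noteq> {} \<Longrightarrow> length (f (image_mset inp (mset_set X))) < K*cap"
      using lenb by blast
  qed
  show "\<exists>T::nat. real T \<le> (4 * (\<bar>d\<bar>/\<kappa> + 2/\<kappa> + 1) + 1) * log 2 (real n) \<and>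
             ncc_solves n (ncc_cap \<kappa> n) ((\<lambda>n f. mkalg n (ncc_cap \<kappa> n) (Kc \<kappa> d n) (Lg n) f (gsel f)) n f)
               (\<lambda>v. if v \<in> A then Some (inp v) else None) T
               (f (image_mset inp (mset_set A)))"
  proof (intro exI conjI)
    show "real (2 * L * K + 1) \<le> (4 * (\<bar>d\<bar>/\<kappa> + 2/\<kappa> + 1) + 1) * log 2 (real n)"
      using T_bound[OF assms n] by (simp add: L_def K_def)
    show "ncc_solves n (ncc_cap \<kappa> n) ((\<lambda>n f. mkalg n (ncc_cap \<kappa> n) (Kc \<kappa> d n) (Lg n) f (gsel f)) n f)
               (\<lambda>v. if v \<in> A then Some (inp v) else None) (2 * L * K + 1)
               (f (image_mset inp (mset_set A)))"
      using solves by (simp add: cap_def K_def L_def)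
  qed
qed

end
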